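(* Let $a\in\mathbb{C}$ with $|a|<1$, and let $\delta_x=x\frac{d}{dx}$. Then there exists a unique function $U(x)$, holomorphic in some neighbourhood of $x=0$ with $U(0)=0$, solving $$(\delta_x^2+a^2)U=x(1+U)^3+(\delta_xU)^2-U\,\delta_x^2U.$$
   Context: This equation is obtained from the degenerate third Painlevé equation $u''=\frac{(u')^2}{u}-\frac{u'}{\tau}+\frac1\tau(-8u^2+2a^2)+\frac{a^2}{u}$ by the substitution $u(\tau)=-\frac{\tau}{2}(1+U(x))$, $x=\tau^2$. *)

theory Defs
  imports "HOL-Complex_Analysis.Complex_Analysis"
begin

definition euler_op :: "(complex \<Rightarrow> complex) \<Rightarrow> complex \<Rightarrow> complex" where
  "euler_op f = (\<lambda>x. x * deriv f x)"

definition solves_eq :: "complex \<Rightarrow> (complex \<Rightarrow> complex) \<Rightarrow> complex set \<Rightarrow> bool" where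
  "solves_eq a U S \<longleftrightarrow> (\<forall>x\<in>S.
     euler_op (euler_op U) x + a^2 * U x
       = x * (1 + U x)^3 + (euler_op U x)^2 - U x * euler_op (euler_op U) x)"

end

theory Submission
  imports Defs
begin

unbundle no vec_syntax

definition Dop :: "complex fps \<Rightarrow> complex fps" where
  "Dop F = Abs_fps (\<lambda>k. of_nat k * F $ k)"

definition Rhs :: "complex fps \<Rightarrow> complex fps" where
  "Rhs F = fps_X * (1 + F)^3 + (Dop F)^2 - F * Dop (Dop F)"

definition Feq :: "complex \<Rightarrow> complex fps \<Rightarrow> bool" where
  "Feq a F \<longleftrightarrow> Dop (Dop F) + fps_const (a^2) * F = Rhs F"

lemma Dop_nth [simp]: "Dop F $ k = of_nat k * F $ k"
  by (simp add: Dop_def)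

lemma Dop_alt: "Dop F = fps_X * fps_deriv F"
  by (rule fps_ext) (auto simp: of_nat_diff)

lemma Rhs_nth:
  assumes "F $ 0 = 0"
  shows "Rhs F $ n = (if n = 0 then 0 else ((1 + F)^3) $ (n - 1)) +
     (\<Sum>i\<le>n. (of_nat i * of_nat (n - i) - of_nat (n - i) ^ 2) * F $ i * F $ (n - i))"
proof -
  have "((Dop F)^2) $ n = (\<Sum>i\<le>n. (of_nat i * of_nat (n - i)) * F $ i * F $ (n - i))"
    by (simp add: power2_eq_square fps_mult_nth atLeast0AtMost algebra_simps)
  moreover have "(F * Dop (Dop F)) $ n = (\<Sum>i\<le>n. (of_nat (n - i) ^ 2) * F $ i * F $ (n - i))"
    by (simp add: power2_eq_square fps_mult_nth atLeast0AtMost algebra_simps)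
  ultimately have "Rhs F $ n = (fps_X * (1 + F)^3) $ n +
     ((\<Sum>i\<le>n. (of_nat i * of_nat (n - i)) * F $ i * F $ (n - i)) -
      (\<Sum>i\<le>n. (of_nat (n - i) ^ 2) * F $ i * F $ (n - i)))"
    by (simp add: Rhs_def)
  also have "(\<Sum>i\<le>n. (of_nat i * of_nat (n - i)) * F $ i * F $ (n - i)) -
      (\<Sum>i\<le>n. (of_nat (n - i) ^ 2) * F $ i * F $ (n - i)) =
      (\<Sum>i\<le>n. (of_nat i * of_nat (n - i) - of_nat (n - i) ^ 2) * F $ i * F $ (n - i))"
    by (simp only: sum_subtractf[symmetric] left_diff_distrib)
  finally show ?thesis by simp
qed

lemma mult_agree:
  fixes f g f' g' :: "complex fps"
  assumes "\<forall>k\<le>m. f $ k = g $ k" "\<forall>k\<le>m. f' $ k = g' $ k"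
  shows "\<forall>k\<le>m. (f * f') $ k = (g * g') $ k"
  using assms by (auto simp: fps_mult_nth intro!: sum.cong)

lemma Rhs_local:
  assumes "F $ 0 = 0" "G $ 0 = 0" "\<forall>k<n. F $ k = G $ k"
  shows "Rhs F $ n = Rhs G $ n"
proof -
  have c: "((1 + F)^3) $ (n - 1) = ((1 + G)^3) $ (n - 1)" if "n > 0"
  proof -
    have a1: "\<forall>k\<le>n-1. (1 + F) $ k = (1 + G) $ k" using assms that by auto
    have "\<forall>k\<le>n-1. ((1 + F) * (1 + F)) $ k = ((1 + G) * (1 + G)) $ k"
      by (rule mult_agree[OF a1 a1])
    hence "\<forall>k\<le>n-1. ((1 + F) * (1 + F) * (1 + F)) $ k = ((1 + G) * (1 + G) * (1 + G)) $ k"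
      by (rule mult_agree[OF _ a1])
    thus ?thesis by (simp add: power3_eq_cube)
  qed
  have s: "(\<Sum>i\<le>n. (of_nat i * of_nat (n - i) - of_nat (n - i) ^ 2) * F $ i * F $ (n - i)) =
           (\<Sum>i\<le>n. (of_nat i * of_nat (n - i) - of_nat (n - i) ^ 2) * G $ i * G $ (n - i))"
  proof (rule sum.cong)
    fix i assume i: "i \<in> {..n}"
    show "(of_nat i * of_nat (n - i) - of_nat (n - i) ^ 2) * F $ i * F $ (n - i) =
          (of_nat i * of_nat (n - i) - of_nat (n - i) ^ 2) * G $ i * G $ (n - i)"
    proof (cases "i = 0 \<or> i = n")
      case True thus ?thesis using assms by auto
    next
      case False thus ?thesis using assms i by auto
    qed
  qed simp
  show ?thesis using c s by (simp add: Rhs_nth assms)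
qed


function useq :: "complex \<Rightarrow> nat \<Rightarrow> complex" where
  "useq a n = (if n = 0 then 0 else
     Rhs (Abs_fps (\<lambda>k. if k < n then useq a k else 0)) $ n / (of_nat n ^ 2 + a ^ 2))"
  by auto
termination by (relation "Wellfounded.measure (\<lambda>(a, n). n)") auto

declare useq.simps [simp del]

definition trunc :: "complex \<Rightarrow> nat \<Rightarrow> complex fps" where
  "trunc a n = Abs_fps (\<lambda>k. if k < n then useq a k else 0)"

definition Uf :: "complex \<Rightarrow> complex fps" where
  "Uf a = Abs_fps (useq a)"

lemma useq_0 [simp]: "useq a 0 = 0"
  by (simp add: useq.simps)

lemma useq_Suc: "n > 0 \<Longrightarrow> useq a n = Rhs (trunc a n) $ n / (of_nat n ^ 2 + a ^ 2)"
  by (simp add: useq.simps[of a n] trunc_def)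

lemma Rhs_0: "F $ 0 = 0 \<Longrightarrow> Rhs F $ 0 = 0"
  by (simp add: Rhs_nth)

lemma denom_nz:
  assumes "norm a < 1" "n > 0"
  shows "of_nat n ^ 2 + a ^ 2 \<noteq> (0::complex)"
proof
  assume "of_nat n ^ 2 + a ^ 2 = (0::complex)"
  hence "norm ((of_nat n :: complex) ^ 2) = norm (a ^ 2)"
    by (metis add_eq_0_iff norm_minus_cancel)
  moreover have "norm (a ^ 2) < 1" using assms by (simp add: norm_power power_less_one_iff abs_square_less_1)
  moreover have "norm ((of_nat n :: complex) ^ 2) \<ge> 1" using assms by (simp add: norm_power)
  ultimately show False by simp
qed

lemma Feq_Uf:
  assumes "norm a < 1"
  shows "Feq a (Uf a)"
  unfolding Feq_def
proof (rule fps_ext)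
  fix n
  show "(Dop (Dop (Uf a)) + fps_const (a^2) * Uf a) $ n = Rhs (Uf a) $ n"
  proof (cases "n = 0")
    case True thus ?thesis by (simp add: Rhs_0 Uf_def)
  next
    case False
    have "Rhs (Uf a) $ n = Rhs (trunc a n) $ n"
      by (rule Rhs_local) (auto simp: Uf_def trunc_def)
    hence "useq a n * (of_nat n ^ 2 + a ^ 2) = Rhs (Uf a) $ n"
      using useq_Suc[of n a] False denom_nz[OF assms, of n] by simp
    thus ?thesis by (simp add: Uf_def algebra_simps power2_eq_square)
  qed
qed

lemma Feq_unique:
  assumes "norm a < 1" "Feq a F" "Feq a G" "F $ 0 = 0" "G $ 0 = 0"
  shows "F = G"
proof -
  have "\<forall>k<n. F $ k = G $ k" for n
  proof (induction n)
    case 0 thus ?case by simp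
  next
    case (Suc n)
    have "F $ n = G $ n"
    proof (cases "n = 0")
      case True thus ?thesis using assms by simp
    next
      case False
      have "Rhs F $ n = Rhs G $ n" by (rule Rhs_local) (use assms Suc in auto)
      hence "(Dop (Dop F) + fps_const (a^2) * F) $ n = (Dop (Dop G) + fps_const (a^2) * G) $ n"
        using assms(2,3) by (simp add: Feq_def)
      hence "(of_nat n ^ 2 + a ^ 2) * F $ n = (of_nat n ^ 2 + a ^ 2) * G $ n"
        by (simp add: algebra_simps power2_eq_square)
      thus ?thesis using denom_nz[OF assms(1), of n] False by simp
    qed
    thus ?case using Suc by (auto simp: less_Suc_eq)
  qed
  thus ?thesis by (intro fps_ext) auto
qed


lemma aux_frac:
  fixes x :: real
  assumes "x > 0"
  shows "1 / (x + 1)^2 + 1 / (x + 1) - 1 / x = - 1 / (x * (x + 1)^2)"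
proof -
  have g: "1 / y^2 + 1 / y - 1 / x = (x + x * y - y^2) / (x * y^2)" if "x > 0" "y > 0" for x y :: real
    using that by (simp add: field_simps power2_eq_square)
  have "x + x * (x + 1) - (x + 1)^2 = -1" by (simp add: power2_eq_square algebra_simps)
  thus ?thesis using g[of x "x + 1"] assms by simp
qed

lemma sum_inv_sq_aux: "n \<ge> 1 \<Longrightarrow> (\<Sum>j\<le>n. 1 / (real j)^2) \<le> 2 - 1 / real n"
proof (induction n rule: nat_induct_at_least)
  case base
  have "{..1::nat} = {0,1}" by auto
  thus ?case by simp
next
  case (Suc n)
  have "(\<Sum>j\<le>Suc n. 1 / (real j)^2) = (\<Sum>j\<le>n. 1 / (real j)^2) + 1 / (real n + 1)^2"
    by simp
  also have "\<dots> \<le> 2 - 1 / real n + 1 / (real n + 1)^2" using Suc by simp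
  also have "\<dots> \<le> 2 - 1 / real (Suc n)"
  proof -
    have n: "real n \<ge> 1" using Suc by simp
    have e: "1 / (real n + 1)^2 + 1 / (real n + 1) - 1 / real n = - 1 / (real n * (real n + 1)^2)"
      using n by (intro aux_frac) simp
    have "- 1 / (real n * (real n + 1)^2) \<le> 0" using n by (simp add: divide_nonpos_pos)
    hence "1 / (real n + 1)^2 + 1 / (real n + 1) \<le> 1 / real n" using e by linarith
    thus ?thesis by (simp only: of_nat_Suc add.commute[of 1 "real n"])
  qed
  finally show ?case .
qed

lemma sum_inv_sq: "(\<Sum>j\<le>n. 1 / (real j)^2) \<le> 2"
proof (cases "n = 0")
  case True thus ?thesis by simp
next
  case False
  hence "(\<Sum>j\<le>n. 1 / (real j)^2) \<le> 2 - 1 / real n" by (intro sum_inv_sq_aux) simp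
  also have "\<dots> \<le> 2" by simp
  finally show ?thesis .
qed

lemma conv_sum: "(\<Sum>i\<le>n. 1 / ((real i)^2 * (real (n - i))^2)) \<le> 8 / (real n)^2"
proof (cases "n = 0")
  case True thus ?thesis by simp
next
  case False
  have t: "(real n)^2 * (1 / ((real i)^2 * (real (n - i))^2)) \<le> 2 / (real i)^2 + 2 / (real (n - i))^2"
    if "i \<le> n" for i
  proof (cases "i = 0 \<or> i = n")
    case True thus ?thesis by auto
  next
    case False
    define x where "x = real i"
    define y where "y = real (n - i)"
    have x: "x > 0" and y: "y > 0" using False that by (auto simp: x_def y_def)
    have n: "real n = x + y" using that by (simp add: x_def y_def)
    have "0 \<le> (x - y)^2" by simp
    hence "(x + y)^2 \<le> 2 * (x^2 + y^2)" by (simp add: power2_eq_square algebra_simps)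
    hence "(x + y)^2 / (x^2 * y^2) \<le> 2 * (x^2 + y^2) / (x^2 * y^2)"
      using x y by (intro divide_right_mono) auto
    also have "\<dots> = 2 / x^2 + 2 / y^2" using x y by (simp add: field_simps)
    finally show ?thesis by (simp add: n x_def[symmetric] y_def[symmetric])
  qed
  have "(real n)^2 * (\<Sum>i\<le>n. 1 / ((real i)^2 * (real (n - i))^2))
        = (\<Sum>i\<le>n. (real n)^2 * (1 / ((real i)^2 * (real (n - i))^2)))"
    by (simp add: sum_distrib_left)
  also have "\<dots> \<le> (\<Sum>i\<le>n. 2 / (real i)^2 + 2 / (real (n - i))^2)"
    by (intro sum_mono t) simp
  also have "\<dots> = 2 * (\<Sum>i\<le>n. 1 / (real i)^2) + 2 * (\<Sum>i\<le>n. 1 / (real (n - i))^2)"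
    by (simp add: sum.distrib sum_distrib_left)
  also have "(\<Sum>i\<le>n. 1 / (real (n - i))^2) = (\<Sum>i\<le>n. 1 / (real i)^2)"
    by (rule sum.reindex_bij_witness[of _ "\<lambda>i. n - i" "\<lambda>i. n - i"]) auto
  also have "2 * (\<Sum>i\<le>n. 1 / (real i)^2) + 2 * (\<Sum>i\<le>n. 1 / (real i)^2) \<le> 8"
    using sum_inv_sq[of n] by simp
  finally have "(real n)^2 * (\<Sum>i\<le>n. 1 / ((real i)^2 * (real (n - i))^2)) \<le> 8" .
  thus ?thesis using False by (simp add: field_simps)
qed

definition bnd :: "real \<Rightarrow> real \<Rightarrow> complex fps \<Rightarrow> bool" where
  "bnd M C f \<longleftrightarrow> (\<forall>k. norm (f $ k) \<le> C * M ^ k / (real k)^2)"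

lemma bnd_mult:
  assumes "bnd M A f" "bnd M B g" "A \<ge> 0" "B \<ge> 0" "M \<ge> 0"
  shows "bnd M (8 * A * B) (f * g)"
  unfolding bnd_def
proof
  fix n
  have "norm ((f * g) $ n) \<le> (\<Sum>i\<le>n. norm (f $ i) * norm (g $ (n - i)))"
    unfolding fps_mult_nth atLeast0AtMost[symmetric]
    by (rule order_trans[OF norm_sum]) (simp add: norm_mult)
  also have "\<dots> \<le> (\<Sum>i\<le>n. (A * M ^ i / (real i)^2) * (B * M ^ (n - i) / (real (n - i))^2))"
    using assms unfolding bnd_def by (intro sum_mono mult_mono) (auto simp del: of_nat_diff)
  also have "\<dots> = (\<Sum>i\<le>n. A * B * M ^ n * (1 / ((real i)^2 * (real (n - i))^2)))"
  proof (rule sum.cong)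
    fix i assume "i \<in> {..n}"
    hence "M ^ i * M ^ (n - i) = M ^ n" by (simp flip: power_add)
    thus "(A * M ^ i / (real i)^2) * (B * M ^ (n - i) / (real (n - i))^2) =
          A * B * M ^ n * (1 / ((real i)^2 * (real (n - i))^2))"
      by (simp add: field_simps)
  qed simp
  also have "\<dots> = A * B * M ^ n * (\<Sum>i\<le>n. 1 / ((real i)^2 * (real (n - i))^2))"
    by (simp add: sum_distrib_left)
  also have "\<dots> \<le> A * B * M ^ n * (8 / (real n)^2)"
    using assms by (intro mult_left_mono conv_sum) auto
  finally show "norm ((f * g) $ n) \<le> 8 * A * B * M ^ n / (real n)^2" by (simp add: mult_ac)
qed


lemma coef_norm:
  assumes "i \<le> n"
  shows "norm (of_nat i * of_nat (n - i) - of_nat (n - i) ^ 2 :: complex) \<le> (real n)^2"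
proof -
  define x where "x = real i"
  define y where "y = real (n - i)"
  have x: "x \<ge> 0" and y: "y \<ge> 0" by (auto simp: x_def y_def)
  have n: "real n = x + y" using assms by (simp add: x_def y_def)
  have "(of_nat i * of_nat (n - i) - of_nat (n - i) ^ 2 :: complex) = of_real (x * y - y^2)"
    by (simp add: x_def y_def)
  hence e: "norm (of_nat i * of_nat (n - i) - of_nat (n - i) ^ 2 :: complex) = \<bar>x * y - y^2\<bar>"
    by (simp only: norm_of_real)
  have xy: "x * y \<ge> 0" using x y by simp
  have xx: "x * x \<ge> 0" using x by simp
  have yy: "y * y \<ge> 0" using y by simp
  have "\<bar>x * y - y^2\<bar> \<le> (x + y)^2"
    using xy xx yy by (simp add: abs_le_iff power2_eq_square algebra_simps)
  thus ?thesis using e n by simp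
qed

lemma quad_bound:
  assumes "bnd M D F" "D \<ge> 0" "M \<ge> 0"
  shows "norm (\<Sum>i\<le>n. (of_nat i * of_nat (n - i) - of_nat (n - i) ^ 2) * F $ i * F $ (n - i))
           \<le> 8 * D^2 * M ^ n"
proof -
  have "norm (\<Sum>i\<le>n. (of_nat i * of_nat (n - i) - of_nat (n - i) ^ 2) * F $ i * F $ (n - i))
      \<le> (\<Sum>i\<le>n. norm (of_nat i * of_nat (n - i) - of_nat (n - i) ^ 2 :: complex) * norm (F $ i) * norm (F $ (n - i)))"
    by (rule order_trans[OF norm_sum]) (simp add: norm_mult)
  also have "\<dots> \<le> (\<Sum>i\<le>n. (real n)^2 * (D * M ^ i / (real i)^2) * (D * M ^ (n - i) / (real (n - i))^2))"
    using assms coef_norm unfolding bnd_def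
    by (intro sum_mono mult_mono) (auto simp del: of_nat_diff)
  also have "\<dots> = (\<Sum>i\<le>n. (real n)^2 * D^2 * M ^ n * (1 / ((real i)^2 * (real (n - i))^2)))"
  proof (rule sum.cong)
    fix i assume "i \<in> {..n}"
    hence "M ^ i * M ^ (n - i) = M ^ n" by (simp flip: power_add)
    thus "(real n)^2 * (D * M ^ i / (real i)^2) * (D * M ^ (n - i) / (real (n - i))^2) =
          (real n)^2 * D^2 * M ^ n * (1 / ((real i)^2 * (real (n - i))^2))"
      by (simp add: field_simps power2_eq_square)
  qed simp
  also have "\<dots> = (real n)^2 * D^2 * M ^ n * (\<Sum>i\<le>n. 1 / ((real i)^2 * (real (n - i))^2))"
    by (simp add: sum_distrib_left)
  also have "\<dots> \<le> (real n)^2 * D^2 * M ^ n * (8 / (real n)^2)"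
    using assms by (intro mult_left_mono conv_sum) auto
  also have "\<dots> \<le> 8 * D^2 * M ^ n"
    using assms by (cases "n = 0") (auto simp: field_simps)
  finally show ?thesis .
qed

lemma pow_div_sq_le: "(M::real) \<ge> 0 \<Longrightarrow> M ^ m / (real m)^2 \<le> M ^ m"
  by (cases "m = 0") (auto simp: divide_le_eq intro: mult_le_cancel_left1[THEN iffD2] order_trans[of _ "M^m * 1"] mult_left_mono)

lemma cubic_bound:
  assumes "bnd M D T" "D \<ge> 0" "D \<le> 1" "M \<ge> 1"
  shows "norm (((1 + T)^3) $ m) \<le> 92 * M ^ m"
proof -
  have e: "(1 + T)^3 = 1 + 3 * T + 3 * (T * T) + T * T * T"
    by (simp add: power3_eq_cube algebra_simps)
  define p where "p = M ^ m / (real m)^2"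
  have p0: "p \<ge> 0" and p1: "p \<le> M ^ m" using assms pow_div_sq_le[of M m] by (auto simp: p_def)
  have b1: "norm (T $ m) \<le> D * p" using assms by (simp add: bnd_def p_def)
  have b2: "bnd M (8 * D * D) (T * T)" using assms by (intro bnd_mult) auto
  hence b2': "norm ((T * T) $ m) \<le> 8 * D * D * p" by (simp add: bnd_def p_def)
  have "bnd M (8 * (8 * D * D) * D) (T * T * T)" using assms b2 by (intro bnd_mult) auto
  hence b3: "norm ((T * T * T) $ m) \<le> 8 * (8 * D * D) * D * p" by (simp add: bnd_def p_def)
  have one: "norm ((1 :: complex fps) $ m) \<le> 1" by simp
  have "norm (((1 + T)^3) $ m) \<le> norm ((1 :: complex fps) $ m) + 3 * norm (T $ m) + 3 * norm ((T * T) $ m) + norm ((T * T * T) $ m)"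
    unfolding e by (simp add: norm_triangle_le norm_mult order_trans[OF norm_triangle_ineq] add_mono)
  also have "\<dots> \<le> 1 + 3 * (D * p) + 3 * (8 * D * D * p) + 8 * (8 * D * D) * D * p"
    using one b1 b2' b3 by linarith
  also have "\<dots> \<le> 1 + 3 * p + 3 * (8 * p) + 64 * p"
  proof -
    have "D * p \<le> p" using assms p0 by (simp add: mult_left_le_one_le)
    moreover have "D * D * p \<le> p" using assms p0 by (simp add: mult_left_le_one_le mult_le_one)
    moreover have "D * D * D * p \<le> p" using assms p0 by (simp add: mult_left_le_one_le mult_le_one)
    ultimately show ?thesis by (simp add: algebra_simps)
  qed
  also have "\<dots> \<le> 92 * M ^ m"
  proof -
    have "1 \<le> M ^ m" using assms(4) by (rule one_le_power)
    thus ?thesis using p1 by simp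
  qed
  finally show ?thesis .
qed


lemma denom_ge:
  assumes "norm a < 1" "n > 0"
  shows "norm (of_nat n ^ 2 + a ^ 2 :: complex) \<ge> (real n)^2 * (1 - (norm a)^2)"
proof -
  have n1: "(real n)^2 \<ge> 1" using assms by simp
  have "norm (of_nat n ^ 2 + a ^ 2 :: complex) \<ge> norm (of_nat n ^ 2 :: complex) - norm (a ^ 2)"
    by (metis norm_diff_ineq)
  moreover have "norm (of_nat n ^ 2 :: complex) = (real n)^2" by (simp add: norm_power)
  moreover have "norm (a ^ 2) = (norm a)^2" by (simp add: norm_power)
  moreover have "(norm a)^2 \<le> (real n)^2 * (norm a)^2" using n1 by (simp add: mult_le_cancel_right1)
  ultimately show ?thesis by (simp add: algebra_simps)
qed

lemma useq_bound:
  assumes "norm a < 1"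
  defines "\<epsilon> \<equiv> 1 - (norm a)^2"
  defines "D \<equiv> \<epsilon> / 16"
  defines "M \<equiv> 2944 / \<epsilon>^2"
  shows "norm (useq a n) \<le> D * M ^ n / (real n)^2"
proof -
  have e0: "\<epsilon> > 0" using assms(1) by (simp add: \<epsilon>_def abs_square_less_1)
  have e1: "\<epsilon> \<le> 1" by (simp add: \<epsilon>_def)
  have D0: "D \<ge> 0" "D \<le> 1" using e0 e1 by (auto simp: D_def)
  have M1: "M \<ge> 1"
  proof -
    have "\<epsilon>^2 \<le> 1" using e0 e1 by (simp add: power_le_one)
    hence "1 \<le> 2944 / \<epsilon>^2" using e0 by (simp add: le_divide_eq)
    thus ?thesis by (simp add: M_def)
  qed
  have key: "\<epsilon> * D * M = 184" "8 * D^2 * M = 92" using e0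
    by (auto simp: D_def M_def field_simps power2_eq_square)
  show ?thesis
  proof (induction n rule: less_induct)
    case (less n)
    show ?case
    proof (cases "n = 0")
      case True thus ?thesis by simp
    next
      case False
      define T where "T = trunc a n"
      have bT: "bnd M D T"
        unfolding bnd_def
      proof
        fix k
        show "norm (T $ k) \<le> D * M ^ k / (real k)^2"
          using less.IH[of k] D0 M1 by (auto simp: T_def trunc_def)
      qed
      have T0: "T $ 0 = 0" using False by (simp add: T_def trunc_def)
      have R: "Rhs T $ n = ((1 + T)^3) $ (n - 1) +
         (\<Sum>i\<le>n. (of_nat i * of_nat (n - i) - of_nat (n - i) ^ 2) * T $ i * T $ (n - i))"
        using Rhs_nth[OF T0, of n] False by simp
      have Mn: "M ^ n = M * M ^ (n - 1)" using False by (cases n) auto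
      have "norm (Rhs T $ n) \<le> 92 * M ^ (n - 1) + 8 * D^2 * M ^ n"
        unfolding R using cubic_bound[OF bT D0 M1, of "n - 1"] quad_bound[OF bT D0(1), of n] M1
        by (intro order_trans[OF norm_triangle_ineq] add_mono) auto
      also have "\<dots> = (92 + 8 * D^2 * M) * M ^ (n - 1)" by (simp add: Mn algebra_simps)
      also have "\<dots> = (\<epsilon> * D * M) * M ^ (n - 1)" using key by simp
      also have "\<dots> = \<epsilon> * D * M ^ n" by (simp add: Mn)
      finally have Rb: "norm (Rhs T $ n) \<le> \<epsilon> * D * M ^ n" .
      have dg: "norm (of_nat n ^ 2 + a ^ 2 :: complex) \<ge> (real n)^2 * \<epsilon>"
        using denom_ge[OF assms(1)] False by (simp add: \<epsilon>_def)
      have pos: "(real n)^2 * \<epsilon> > 0" using False e0 by simp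
      have "norm (useq a n) = norm (Rhs T $ n) / norm (of_nat n ^ 2 + a ^ 2 :: complex)"
        using useq_Suc[of n a] False by (simp add: T_def norm_divide)
      also have "\<dots> \<le> norm (Rhs T $ n) / ((real n)^2 * \<epsilon>)"
      proof (rule divide_left_mono)
        show "0 < norm (of_nat n ^ 2 + a ^ 2 :: complex) * ((real n)^2 * \<epsilon>)"
          using mult_pos_pos[OF order_less_le_trans[OF pos dg] pos] .
      qed (use dg pos in auto)
      also have "\<dots> \<le> (\<epsilon> * D * M ^ n) / ((real n)^2 * \<epsilon>)"
        using Rb pos by (intro divide_right_mono) auto
      also have "\<dots> = D * M ^ n / (real n)^2" using e0 by (simp add: field_simps)
      finally show ?thesis .
    qed
  qed
qed

lemma Uf_radius:
  assumes "norm a < 1"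
  shows "\<exists>r>0. ereal r \<le> fps_conv_radius (Uf a)"
proof -
  define \<epsilon> where "\<epsilon> = 1 - (norm a)^2"
  define D where "D = \<epsilon> / 16"
  define M where "M = 2944 / \<epsilon>^2"
  have e0: "\<epsilon> > 0" using assms(1) by (simp add: \<epsilon>_def abs_square_less_1)
  have M0: "M > 0" using e0 by (simp add: M_def)
  have D0: "D \<ge> 0" using e0 by (simp add: D_def)
  have b: "norm (useq a n) \<le> D * M ^ n" for n
  proof -
    have "norm (useq a n) \<le> D * M ^ n / (real n)^2"
      using useq_bound[OF assms] by (simp add: \<epsilon>_def D_def M_def)
    also have "\<dots> = D * (M ^ n / (real n)^2)" by simp
    also have "\<dots> \<le> D * M ^ n"
      using pow_div_sq_le[of M n] M0 D0 by (intro mult_left_mono) auto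
    finally show ?thesis .
  qed
  define z :: complex where "z = of_real (1 / (2 * M))"
  have nz: "norm z = 1 / (2 * M)" unfolding z_def norm_of_real using M0 by simp
  have "summable (\<lambda>n. useq a n * z ^ n)"
  proof (rule summable_comparison_test'[where g = "\<lambda>n. D * (1/2)^n"])
    show "summable (\<lambda>n. D * (1/2::real)^n)" by (intro summable_mult summable_geometric) simp
    fix n
    have "norm (useq a n * z ^ n) = norm (useq a n) * (1 / (2 * M))^n" by (simp add: norm_mult norm_power nz)
    also have "\<dots> \<le> D * M ^ n * (1 / (2 * M))^n" using b M0 by (intro mult_right_mono) auto
    also have "\<dots> = D * (1/2)^n" using M0 by (simp add: power_divide field_simps power_mult_distrib)
    finally show "norm (useq a n * z ^ n) \<le> D * (1/2)^n" .
  qed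
  hence "conv_radius (useq a) \<ge> norm z" by (rule conv_radius_geI)
  hence "fps_conv_radius (Uf a) \<ge> ereal (1 / (2 * M))"
    by (simp add: fps_conv_radius_def Uf_def nz)
  thus ?thesis using M0 by (intro exI[of _ "1 / (2 * M)"]) auto
qed


lemma rad_Dop: "fps_conv_radius (Dop F) \<ge> fps_conv_radius F"
proof -
  have "fps_conv_radius (fps_X * fps_deriv F) \<ge> min (fps_conv_radius fps_X) (fps_conv_radius (fps_deriv F))"
    using fps_conv_radius_mult[of "fps_X :: complex fps" "fps_deriv F"] by simp
  moreover have "fps_conv_radius (fps_deriv F) \<ge> fps_conv_radius F" by (rule fps_conv_radius_deriv)
  ultimately show ?thesis by (simp add: Dop_alt)
qed

lemma eval_Dop:
  assumes "norm z < fps_conv_radius F"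
  shows "eval_fps (Dop F) z = z * deriv (eval_fps F) z"
proof -
  have "norm z < fps_conv_radius (fps_deriv F)"
    using assms fps_conv_radius_deriv[of F] by (rule less_le_trans)
  hence "eval_fps (fps_X * fps_deriv F) z = z * eval_fps (fps_deriv F) z"
    by (subst eval_fps_mult) auto
  thus ?thesis using eval_fps_deriv[OF assms] by (simp add: Dop_alt)
qed

lemma fps_expansion_unique:
  fixes f :: "complex \<Rightarrow> complex"
  assumes "f has_fps_expansion F" "f has_fps_expansion G"
  shows "F = G"
proof (rule eval_fps_eqD)
  show "fps_conv_radius F > 0" "fps_conv_radius G > 0" using assms by (auto simp: has_fps_expansion_def)
  have "eventually (\<lambda>z. eval_fps F z = f z) (nhds 0)" "eventually (\<lambda>z. eval_fps G z = f z) (nhds 0)"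
    using assms by (auto simp: has_fps_expansion_def)
  thus "eventually (\<lambda>z. eval_fps F z = eval_fps G z) (nhds 0)"
    by eventually_elim simp
qed

lemma euler_has_fps:
  assumes "f has_fps_expansion F"
  shows "euler_op f has_fps_expansion Dop F"
proof -
  have "(\<lambda>x. x * deriv f x) has_fps_expansion fps_X * fps_deriv F"
    by (intro has_fps_expansion_mult has_fps_expansion_fps_X has_fps_expansion_deriv assms)
  thus ?thesis by (simp add: euler_op_def Dop_alt)
qed

lemma formal_of_solution:
  assumes "s > 0" "V holomorphic_on ball 0 s" "solves_eq a V (ball 0 s)"
  shows "Feq a (fps_expansion V 0)"
proof -
  define F where "F = fps_expansion V 0"
  have hV: "V has_fps_expansion F" unfolding F_def
    by (rule has_fps_expansion_fps_expansion[of "ball 0 s"]) (use assms in auto)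
  have h1: "euler_op V has_fps_expansion Dop F" by (rule euler_has_fps[OF hV])
  have h2: "euler_op (euler_op V) has_fps_expansion Dop (Dop F)" by (rule euler_has_fps[OF h1])
  have L: "(\<lambda>x. euler_op (euler_op V) x + a^2 * V x) has_fps_expansion Dop (Dop F) + fps_const (a^2) * F"
    by (intro has_fps_expansion_add has_fps_expansion_cmult_left h2 hV)
  have R: "(\<lambda>x. x * (1 + V x)^3 + (euler_op V x)^2 - V x * euler_op (euler_op V) x) has_fps_expansion Rhs F"
    unfolding Rhs_def
    by (intro has_fps_expansion_add has_fps_expansion_diff has_fps_expansion_mult has_fps_expansion_power
          has_fps_expansion_fps_X has_fps_expansion_1 h1 h2 hV)
  have ev: "eventually (\<lambda>x. x \<in> ball 0 s) (nhds 0)"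
    using assms(1) by (intro eventually_nhds_in_open) auto
  have "eventually (\<lambda>x. (\<lambda>x. x * (1 + V x)^3 + (euler_op V x)^2 - V x * euler_op (euler_op V) x) x =
        (\<lambda>x. euler_op (euler_op V) x + a^2 * V x) x) (nhds 0)"
    using ev by eventually_elim (use assms(3) in \<open>auto simp: solves_eq_def\<close>)
  from has_fps_expansion_cong[OF this refl, of "Rhs F"]
  have "(\<lambda>x. euler_op (euler_op V) x + a^2 * V x) has_fps_expansion Rhs F"
    using R by simp
  hence "Dop (Dop F) + fps_const (a^2) * F = Rhs F" using L fps_expansion_unique by blast
  thus ?thesis by (simp add: Feq_def F_def)
qed


lemma solves_Uf:
  assumes "norm a < 1" "ereal r \<le> fps_conv_radius (Uf a)"
  shows "solves_eq a (eval_fps (Uf a)) (ball 0 r)"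
  unfolding solves_eq_def
proof
  fix x :: complex assume "x \<in> ball 0 r"
  hence xr: "norm x < r" by simp
  define F where "F = Uf a"
  define U where "U = eval_fps F"
  have "ereal (norm x) < ereal r" using xr by simp
  hence rF: "norm x < fps_conv_radius F" using assms(2) unfolding F_def by (rule less_le_trans)
  have rD1: "norm x < fps_conv_radius (Dop F)" using rF rad_Dop[of F] by (rule less_le_trans)
  have rD2: "norm x < fps_conv_radius (Dop (Dop F))" using rD1 rad_Dop[of "Dop F"] by (rule less_le_trans)
  have E1: "euler_op U y = eval_fps (Dop F) y" if "norm y < fps_conv_radius F" for y
    using eval_Dop[OF that] by (simp add: euler_op_def U_def)
  have ev: "eventually (\<lambda>y. y \<in> eball 0 (fps_conv_radius F)) (nhds x)"
    using rF by (intro eventually_nhds_in_open) auto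
  have "deriv (euler_op U) x = deriv (eval_fps (Dop F)) x"
    by (rule deriv_cong_ev[OF _ refl]) (use ev in \<open>eventually_elim, use E1 in auto\<close>)
  hence E2: "euler_op (euler_op U) x = eval_fps (Dop (Dop F)) x"
    using eval_Dop[OF rD1] by (simp add: euler_op_def)
  have inf: "fps_conv_radius (fps_X :: complex fps) = \<infinity>" "fps_conv_radius (1 :: complex fps) = \<infinity>"
       "fps_conv_radius (fps_const (a^2)) = \<infinity>" by simp_all
  have r1F: "norm x < fps_conv_radius (1 + F)"
    using fps_conv_radius_add[of 1 F] rF by (simp add: inf; meson less_le_trans)
  have r3: "norm x < fps_conv_radius ((1 + F)^3)"
    using r1F fps_conv_radius_power[of "1 + F" 3] by (rule less_le_trans)
  have rX3: "norm x < fps_conv_radius (fps_X * (1 + F)^3)"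
    using fps_conv_radius_mult[of fps_X "(1 + F)^3"] r3 by (simp add: inf; meson less_le_trans)
  have rsq: "norm x < fps_conv_radius ((Dop F)^2)"
    using rD1 fps_conv_radius_power[of "Dop F" 2] by (rule less_le_trans)
  have rFD: "norm x < fps_conv_radius (F * Dop (Dop F))"
    using fps_conv_radius_mult[of F "Dop (Dop F)"] rF rD2 by (meson less_le_trans min_less_iff_conj)
  have rS: "norm x < fps_conv_radius (fps_X * (1 + F)^3 + (Dop F)^2)"
    using fps_conv_radius_add[of "fps_X * (1 + F)^3" "(Dop F)^2"] rX3 rsq by (meson less_le_trans min_less_iff_conj)
  have rc: "norm x < fps_conv_radius (fps_const (a^2) * F)"
    using fps_conv_radius_mult[of "fps_const (a^2)" F] rF by (simp add: inf; meson less_le_trans)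
  have feq: "Dop (Dop F) + fps_const (a^2) * F = Rhs F" using Feq_Uf[OF assms(1)] by (simp add: F_def Feq_def)
  have "eval_fps (Dop (Dop F) + fps_const (a^2) * F) x = eval_fps (Dop (Dop F)) x + a^2 * U x"
    using rD2 rc rF by (simp add: eval_fps_add eval_fps_mult U_def)
  moreover have "eval_fps (Rhs F) x = x * (1 + U x)^3 + (eval_fps (Dop F) x)^2 - U x * eval_fps (Dop (Dop F)) x"
    unfolding Rhs_def using rS rFD rX3 rsq r3 r1F rD1 rD2 rF
    by (simp add: eval_fps_add eval_fps_diff eval_fps_mult eval_fps_power U_def)
  ultimately have "eval_fps (Dop (Dop F)) x + a^2 * U x = x * (1 + U x)^3 + (eval_fps (Dop F) x)^2 - U x * eval_fps (Dop (Dop F)) x"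
    using feq by simp
  thus "euler_op (euler_op (eval_fps (Uf a))) x + a\<^sup>2 * eval_fps (Uf a) x =
         x * (1 + eval_fps (Uf a) x) ^ 3 + (euler_op (eval_fps (Uf a)) x)\<^sup>2 -
         eval_fps (Uf a) x * euler_op (euler_op (eval_fps (Uf a))) x"
    using E2 E1[OF rF] by (simp add: U_def F_def)
qed


theorem lemma2:
  fixes a :: complex
  assumes "norm a < 1"
  shows "\<exists>U r. r > 0 \<and> U holomorphic_on ball 0 r \<and> U 0 = 0 \<and> solves_eq a U (ball 0 r) \<and>
     (\<forall>V s. s > 0 \<and> V holomorphic_on ball 0 s \<and> V 0 = 0 \<and> solves_eq a V (ball 0 s)
        \<longrightarrow> (\<forall>x\<in>ball 0 (min r s). V x = U x))"
proof -
  obtain r where r0: "r > 0" and rr: "ereal r \<le> fps_conv_radius (Uf a)"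
    using Uf_radius[OF assms] by blast
  define U where "U = eval_fps (Uf a)"
  have hol: "U holomorphic_on ball 0 r"
    unfolding U_def by (intro holomorphic_on_eval_fps ball_eball_mono rr)
  have U0: "U 0 = 0" by (simp add: U_def eval_fps_at_0 Uf_def)
  have sol: "solves_eq a U (ball 0 r)" unfolding U_def by (rule solves_Uf[OF assms rr])
  have radpos: "fps_conv_radius (Uf a) > 0" using r0 rr by (metis ereal_less(2) le_less_trans less_le_trans order_less_le zero_ereal_def ereal_less_eq(3))
  have hU: "U has_fps_expansion Uf a" unfolding U_def by (rule eval_fps_has_fps_expansion[OF radpos])
  have uniq: "\<forall>x\<in>ball 0 (min r s). V x = U x"
    if V: "s > 0" "V holomorphic_on ball 0 s" "V 0 = 0" "solves_eq a V (ball 0 s)" for V s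
  proof
    fix x :: complex assume x: "x \<in> ball 0 (min r s)"
    define F where "F = fps_expansion V 0"
    have hV: "V has_fps_expansion F" unfolding F_def
      by (rule has_fps_expansion_fps_expansion[of "ball 0 s"]) (use V in auto)
    have fe: "Feq a F" unfolding F_def by (rule formal_of_solution[OF V(1,2,4)])
    have F0: "F $ 0 = 0" using fps_nth_fps_expansion[OF hV, of 0] V(3) by simp
    have FU: "F = Uf a" by (rule Feq_unique[OF assms fe Feq_Uf[OF assms] F0]) (simp add: Uf_def)
    show "V x = U x"
    proof (rule holomorphic_fun_eq_on_ball[OF _ _ x])
      show "V holomorphic_on ball 0 (min r s)" using V(2) by (rule holomorphic_on_subset) auto
      show "U holomorphic_on ball 0 (min r s)" using hol by (rule holomorphic_on_subset) auto
      fix n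
      have "F $ n = (deriv ^^ n) V 0 / fact n" by (rule fps_nth_fps_expansion[OF hV])
      moreover have "Uf a $ n = (deriv ^^ n) U 0 / fact n" by (rule fps_nth_fps_expansion[OF hU])
      ultimately show "(deriv ^^ n) V 0 = (deriv ^^ n) U 0" using FU by simp
    qed
  qed
  show ?thesis
    using r0 hol U0 sol uniq by blast
qed

end
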